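(* Let a shallow network be given and let $\theta\in\Theta\setminus\mathcal{E}(\mathcal{X})$ be a redundant parameter. Then there exists a straight line $\ell\subseteq\Theta$ containing $\theta$ such that for all $\vartheta\in\ell$, $\Psi_\vartheta=\Psi_\theta$ on $\mathcal{X}$.
   Context: Shallow network: finite pairwise disjoint sets $V_0,V_1,V_2$ and a measurable activation $\psi:\mathbb{R}\to\mathbb{R}$; $E=(V_0\times V_1)\cup(V_1\times V_2)$; $\Theta=\mathbb{R}^E\times\mathbb{R}^{V_1\cup V_2}$, $\theta=(w,\beta)$; response $(\Psi_\theta(x))_l=\beta_l+\sum_{j\in V_1}\psi(\beta_j+\sum_{i\in V_0}x_iw_{ij})w_{jl}$; $w_{j\bullet}=(w_{jl})_{l\in V_2}$. $\mathcal{X}\subseteq\mathbb{R}^{V_0}$ is the support of the input distribution. $\theta$ is efficient if (a) $w_{k\bullet}\not\equiv0$ for all $k\in V_1$ and (b) the only $(\lambda_j)_{j\in V_1\cup\{\emptyset\}}$ with $\lambda_\emptyset+\sum_{j\in V_1}\lambda_j\psi(\beta_j+\sum_{i\in V_0}x_iw_{ij})=0$ for all $x\in\mathcal{X}$ is $\lambda\equiv0$; $\mathcal{E}(\mathcal{X})$ is the set of efficient parameters, and non-efficient parameters are called redundant. *)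

theory Defs
  imports "HOL-Analysis.Analysis"
begin

text \<open>Parameters theta = (w, beta) with w :: 'v => 'v => real (weights on edges) and
beta :: 'v => real (biases on V1 and V2).  Inputs x :: 'v => real, only coordinates in V0 matter.\<close>

definition edges :: "'v set \<Rightarrow> 'v set \<Rightarrow> 'v set \<Rightarrow> ('v \<times> 'v) set" where
  "edges V0 V1 V2 = (V0 \<times> V1) \<union> (V1 \<times> V2)"

text \<open>The parameter space Theta = R^E x R^(V1 u V2), realised as the linear subspace of
pairs of functions vanishing outside E resp. outside V1 u V2.\<close>
definition Theta :: "'v set \<Rightarrow> 'v set \<Rightarrow> 'v set \<Rightarrow> (('v \<Rightarrow> 'v \<Rightarrow> real) \<times> ('v \<Rightarrow> real)) set" where
  "Theta V0 V1 V2 = {(w, \<beta>). (\<forall>i j. (i, j) \<notin> edges V0 V1 V2 \<longrightarrow> w i j = 0)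
                              \<and> (\<forall>k. k \<notin> V1 \<union> V2 \<longrightarrow> \<beta> k = 0)}"

text \<open>Network response (Psi_theta(x))_l, meaningful for l in V2.\<close>
definition response :: "'v set \<Rightarrow> 'v set \<Rightarrow> (real \<Rightarrow> real) \<Rightarrow>
     (('v \<Rightarrow> 'v \<Rightarrow> real) \<times> ('v \<Rightarrow> real)) \<Rightarrow> ('v \<Rightarrow> real) \<Rightarrow> 'v \<Rightarrow> real" where
  "response V0 V1 \<psi> \<theta> x l =
     snd \<theta> l + (\<Sum>j\<in>V1. \<psi> (snd \<theta> j + (\<Sum>i\<in>V0. x i * fst \<theta> i j)) * fst \<theta> j l)"

definition efficient :: "'v set \<Rightarrow> 'v set \<Rightarrow> 'v set \<Rightarrow> (real \<Rightarrow> real) \<Rightarrow> ('v \<Rightarrow> real) set \<Rightarrow>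
     (('v \<Rightarrow> 'v \<Rightarrow> real) \<times> ('v \<Rightarrow> real)) \<Rightarrow> bool" where
  "efficient V0 V1 V2 \<psi> X \<theta> \<longleftrightarrow>
     (\<forall>k\<in>V1. \<exists>l\<in>V2. fst \<theta> k l \<noteq> 0) \<and>
     (\<forall>(c0::real) (c::'v \<Rightarrow> real).
        (\<forall>x\<in>X. c0 + (\<Sum>j\<in>V1. c j * \<psi> (snd \<theta> j + (\<Sum>i\<in>V0. x i * fst \<theta> i j))) = 0)
        \<longrightarrow> c0 = 0 \<and> (\<forall>j\<in>V1. c j = 0))"

end

theory Submission
  imports Defs
begin

theorem theorem4p1:
  fixes V0 V1 V2 :: "'v set" and \<psi> :: "real \<Rightarrow> real" and X :: "('v \<Rightarrow> real) set"
    and \<theta> :: "('v \<Rightarrow> 'v \<Rightarrow> real) \<times> ('v \<Rightarrow> real)"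
  assumes "finite V0" "finite V1" "finite V2"
    and "V0 \<inter> V1 = {}" "V0 \<inter> V2 = {}" "V1 \<inter> V2 = {}"
    and "\<psi> \<in> borel_measurable borel"
    and "X \<noteq> {}" "\<forall>x\<in>X. \<forall>i. i \<notin> V0 \<longrightarrow> x i = 0"
    and "\<theta> \<in> Theta V0 V1 V2"
    and "\<not> efficient V0 V1 V2 \<psi> X \<theta>"
  shows "\<exists>d\<in>Theta V0 V1 V2. d \<noteq> (\<lambda>_ _. 0, \<lambda>_. 0) \<and>
           (\<forall>t::real. \<forall>x\<in>X. \<forall>l\<in>V2.
              response V0 V1 \<psi> (\<lambda>i j. fst \<theta> i j + t * fst d i j, \<lambda>k. snd \<theta> k + t * snd d k) x l
              = response V0 V1 \<psi> \<theta> x l)"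
proof (cases "\<exists>k\<in>V1. \<forall>l\<in>V2. fst \<theta> k l = 0")
  case True
  then obtain k where k: "k \<in> V1" "\<forall>l\<in>V2. fst \<theta> k l = 0" by blast
  define d :: "('v \<Rightarrow> 'v \<Rightarrow> real) \<times> ('v \<Rightarrow> real)"
    where "d = (\<lambda>_ _. 0, \<lambda>m. if m = k then 1 else 0)"
  have "d \<in> Theta V0 V1 V2" using k unfolding d_def Theta_def by auto
  moreover have "d \<noteq> (\<lambda>_ _. 0, \<lambda>_. 0)" proof
    assume "d = (\<lambda>_ _. 0, \<lambda>_. 0)"
    then have "snd d k = 0" by simp
    then show False by (simp add: d_def)
  qed
  moreover have "response V0 V1 \<psi> (\<lambda>i j. fst \<theta> i j + t * fst d i j, \<lambda>m. snd \<theta> m + t * snd d m) x l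
              = response V0 V1 \<psi> \<theta> x l" if "l \<in> V2" for t x l
  proof -
    have lk: "l \<noteq> k" using that k assms(6) by blast
    have "(\<Sum>j\<in>V1. \<psi> (snd \<theta> j + t * snd d j + (\<Sum>i\<in>V0. x i * (fst \<theta> i j + t * fst d i j))) * (fst \<theta> j l + t * fst d j l))
        = (\<Sum>j\<in>V1. \<psi> (snd \<theta> j + (\<Sum>i\<in>V0. x i * fst \<theta> i j)) * fst \<theta> j l)"
      by (rule sum.cong) (use k that in \<open>auto simp: d_def\<close>)
    then show ?thesis unfolding response_def using lk by (simp add: d_def)
  qed
  ultimately show ?thesis by blast
next
  case False
  obtain c0 c where rel: "\<forall>x\<in>X. c0 + (\<Sum>j\<in>V1. c j * \<psi> (snd \<theta> j + (\<Sum>i\<in>V0. x i * fst \<theta> i j))) = 0"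
    and nz: "c0 \<noteq> 0 \<or> (\<exists>j\<in>V1. c j \<noteq> 0)"
    using assms(11) False unfolding efficient_def by auto
  have "V2 \<noteq> {}"
  proof
    assume e: "V2 = {}"
    with False have "V1 = {}" by auto
    with rel assms(8) have "c0 = 0" by auto
    with nz \<open>V1 = {}\<close> show False by auto
  qed
  then obtain l0 where l0: "l0 \<in> V2" by blast
  define d :: "('v \<Rightarrow> 'v \<Rightarrow> real) \<times> ('v \<Rightarrow> real)"
    where "d = (\<lambda>j l. if j \<in> V1 \<and> l \<in> V2 then c j else 0, \<lambda>l. if l \<in> V2 then c0 else 0)"
  have "d \<in> Theta V0 V1 V2" unfolding d_def Theta_def edges_def by auto
  moreover have "d \<noteq> (\<lambda>_ _. 0, \<lambda>_. 0)"
  proof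
    assume h: "d = (\<lambda>_ _. 0, \<lambda>_. 0)"
    from nz show False
    proof
      assume "c0 \<noteq> 0"
      moreover have "snd d l0 = 0" using h by simp
      ultimately show False using l0 by (simp add: d_def)
    next
      assume "\<exists>j\<in>V1. c j \<noteq> 0"
      then obtain j where "j \<in> V1" "c j \<noteq> 0" by blast
      moreover have "fst d j l0 = 0" using h by simp
      ultimately show False using l0 by (simp add: d_def)
    qed
  qed
  moreover have "response V0 V1 \<psi> (\<lambda>i j. fst \<theta> i j + t * fst d i j, \<lambda>m. snd \<theta> m + t * snd d m) x l
              = response V0 V1 \<psi> \<theta> x l" if "l \<in> V2" "x \<in> X" for t x l
  proof -
    have "(\<Sum>j\<in>V1. \<psi> (snd \<theta> j + t * snd d j + (\<Sum>i\<in>V0. x i * (fst \<theta> i j + t * fst d i j))) * (fst \<theta> j l + t * fst d j l))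
        = (\<Sum>j\<in>V1. \<psi> (snd \<theta> j + (\<Sum>i\<in>V0. x i * fst \<theta> i j)) * fst \<theta> j l
              + t * (c j * \<psi> (snd \<theta> j + (\<Sum>i\<in>V0. x i * fst \<theta> i j))))"
    proof (rule sum.cong)
      fix j assume j: "j \<in> V1"
      have "j \<notin> V2" using j assms(6) by blast
      moreover have "(\<Sum>i\<in>V0. x i * (fst \<theta> i j + t * fst d i j)) = (\<Sum>i\<in>V0. x i * fst \<theta> i j)"
        by (rule sum.cong) (use assms(4) in \<open>auto simp: d_def\<close>)
      ultimately show "\<psi> (snd \<theta> j + t * snd d j + (\<Sum>i\<in>V0. x i * (fst \<theta> i j + t * fst d i j))) * (fst \<theta> j l + t * fst d j l)
        = \<psi> (snd \<theta> j + (\<Sum>i\<in>V0. x i * fst \<theta> i j)) * fst \<theta> j l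
              + t * (c j * \<psi> (snd \<theta> j + (\<Sum>i\<in>V0. x i * fst \<theta> i j)))"
        using j that by (simp add: d_def algebra_simps)
    qed simp
    also have "\<dots> = (\<Sum>j\<in>V1. \<psi> (snd \<theta> j + (\<Sum>i\<in>V0. x i * fst \<theta> i j)) * fst \<theta> j l)
        + t * (\<Sum>j\<in>V1. c j * \<psi> (snd \<theta> j + (\<Sum>i\<in>V0. x i * fst \<theta> i j)))"
      by (simp add: sum.distrib sum_distrib_left)
    finally have eq: "(\<Sum>j\<in>V1. \<psi> (snd \<theta> j + t * snd d j + (\<Sum>i\<in>V0. x i * (fst \<theta> i j + t * fst d i j))) * (fst \<theta> j l + t * fst d j l))
        = (\<Sum>j\<in>V1. \<psi> (snd \<theta> j + (\<Sum>i\<in>V0. x i * fst \<theta> i j)) * fst \<theta> j l)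
        + t * (\<Sum>j\<in>V1. c j * \<psi> (snd \<theta> j + (\<Sum>i\<in>V0. x i * fst \<theta> i j)))" .
    have r: "(\<Sum>j\<in>V1. c j * \<psi> (snd \<theta> j + (\<Sum>i\<in>V0. x i * fst \<theta> i j))) = - c0"
      proof -
      have "c0 + (\<Sum>j\<in>V1. c j * \<psi> (snd \<theta> j + (\<Sum>i\<in>V0. x i * fst \<theta> i j))) = 0"
        using rel that(2) by blast
      then show ?thesis by linarith
    qed
    have sd: "snd d l = c0" using that by (simp add: d_def)
    show ?thesis unfolding response_def fst_conv snd_conv eq sd r
      by simp
  qed
  ultimately show ?thesis by blast
qed

end
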